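(* (i) The map $m\mapsto\dfrac{N(m,m)}{G(m)D(m,m)}$ is decreasing on $(0,\overline x]$. (ii) For every $m\in(0,\overline x]$, the map $x\mapsto\dfrac{N(x,m)}{G(x)D(x,m)}$ is decreasing on $[m,\eta(m)]$.
   Context: $\mathcal I=(\alpha,\infty)$, $-\infty\le\alpha<0$; $\mu,\sigma:\mathcal I\to\mathbb R$ Lipschitz with $\sigma>0$, $\alpha,+\infty$ natural boundaries of $dX_t=\mu(X_t)dt+\sigma(X_t)dB_t$; $r>0$; $U:[0,\infty)\to[0,\infty)$. Assumptions: (a) $\mu,\sigma$ are $C^1$ with Lipschitz derivatives, $\mu(0)>rU(0)$, $\sup_{x\ge0}\mu'(x)<r$; (b) $U$ is nondecreasing, concave, $C^2$ on $[0,\infty)$, and for some $u^*\ge0$: $U'\ge1$ on $[0,u^*]$, $U'=1$ on $[u^*,\infty)$, $\mu U'+\frac12\sigma^2U''-rU>0$ on $[0,u^* )$; (c) $\mu$ is twice differentiable with $\mu''\le0$ on $[0,\infty)$. Notation. $\overline x>0$ is the unique point with $\mu-rU>0$ on $[0,\overline x)$ and $\mu-rU<0$ on $(\overline x,\infty)$. $\psi,\phi$ are the positive increasing and decreasing solutions of $\frac12\sigma^2(x)u''+\mu(x)u'-ru=0$. $D(x,m)=\psi'(x)\phi(m)-\phi'(x)\psi(m)$, $N(x,m)=\phi(x)\psi(m)-\psi(x)\phi(m)+D(x,m)\frac{\mu(x)}{r}-D(x,x)U(m)$, $G(x)=1-\mu'(x)/r$. It is known that for every $m\in[0,\overline x]$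 the equation $N(x,m)=0$ has a unique solution $x=\eta(m)\ge0$, with $\eta(m)\ge m$, $N(x,m)>0$ for $x<\eta(m)$ and $N(x,m)<0$ for $x>\eta(m)$. *)

theory Defs
  imports "HOL-Analysis.Analysis"
begin

definition state_space :: "ereal \<Rightarrow> real set" where
  "state_space \<alpha> = {x. \<alpha> < ereal x}"

text \<open>Scale density (reference point 0) and speed density of dX = mu dt + sigma dB.\<close>
definition scale_dens :: "(real \<Rightarrow> real) \<Rightarrow> (real \<Rightarrow> real) \<Rightarrow> real \<Rightarrow> real" where
  "scale_dens \<mu> \<sigma> x = exp (- (LBINT y=0..x. 2 * \<mu> y / (\<sigma> y)\<^sup>2))"

definition speed_dens :: "(real \<Rightarrow> real) \<Rightarrow> (real \<Rightarrow> real) \<Rightarrow> real \<Rightarrow> real" where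
  "speed_dens \<mu> \<sigma> x = 2 / ((\<sigma> x)\<^sup>2 * scale_dens \<mu> \<sigma> x)"

text \<open>Feller's boundary classification: a boundary is natural iff both Feller integrals
  Sigma and N (double integrals of s(.)m(.) over the two orderings of the triangle between
  the boundary and the reference point 0) are infinite.\<close>
definition natural_left :: "ereal \<Rightarrow> (real \<Rightarrow> real) \<Rightarrow> (real \<Rightarrow> real) \<Rightarrow> bool" where
  "natural_left \<alpha> \<mu> \<sigma> \<longleftrightarrow>
     (\<integral>\<^sup>+ a. \<integral>\<^sup>+ b. indicator {(u,v). \<alpha> < ereal u \<and> u < v \<and> v < 0} (a,b)
          * ennreal (scale_dens \<mu> \<sigma> a * speed_dens \<mu> \<sigma> b) \<partial>lborel \<partial>lborel) = \<infinity> \<and>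
     (\<integral>\<^sup>+ a. \<integral>\<^sup>+ b. indicator {(u,v). \<alpha> < ereal u \<and> u < v \<and> v < 0} (a,b)
          * ennreal (speed_dens \<mu> \<sigma> a * scale_dens \<mu> \<sigma> b) \<partial>lborel \<partial>lborel) = \<infinity>"

definition natural_right :: "(real \<Rightarrow> real) \<Rightarrow> (real \<Rightarrow> real) \<Rightarrow> bool" where
  "natural_right \<mu> \<sigma> \<longleftrightarrow>
     (\<integral>\<^sup>+ a. \<integral>\<^sup>+ b. indicator {(u,v). 0 < u \<and> u < v} (a,b)
          * ennreal (scale_dens \<mu> \<sigma> a * speed_dens \<mu> \<sigma> b) \<partial>lborel \<partial>lborel) = \<infinity> \<and>
     (\<integral>\<^sup>+ a. \<integral>\<^sup>+ b. indicator {(u,v). 0 < u \<and> u < v} (a,b)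
          * ennreal (speed_dens \<mu> \<sigma> a * scale_dens \<mu> \<sigma> b) \<partial>lborel \<partial>lborel) = \<infinity>"

definition Dfun :: "(real \<Rightarrow> real) \<Rightarrow> (real \<Rightarrow> real) \<Rightarrow> real \<Rightarrow> real \<Rightarrow> real" where
  "Dfun \<psi> \<phi> x m = deriv \<psi> x * \<phi> m - deriv \<phi> x * \<psi> m"

definition Nfun :: "(real \<Rightarrow> real) \<Rightarrow> (real \<Rightarrow> real) \<Rightarrow> (real \<Rightarrow> real) \<Rightarrow> real
                    \<Rightarrow> (real \<Rightarrow> real) \<Rightarrow> real \<Rightarrow> real \<Rightarrow> real" where
  "Nfun \<psi> \<phi> \<mu> r U x m = \<phi> x * \<psi> m - \<psi> x * \<phi> m + Dfun \<psi> \<phi> x m * (\<mu> x / r)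
                         - Dfun \<psi> \<phi> x x * U m"

definition Gfun :: "(real \<Rightarrow> real) \<Rightarrow> real \<Rightarrow> real \<Rightarrow> real" where
  "Gfun \<mu> r x = 1 - deriv \<mu> x / r"

end

theory Submission
  imports Defs
begin

lemma alg2:
  fixes r s a b c p p1 p2 q q1 q2 u u1 u2 :: real
  assumes s: "s > 0" and r: "r > 0"
    and p2: "s * p2 = r * p - u * p1" and q2: "s * q2 = r * q - u * q1"
  shows "(q1 * a - p1 * b + ((p2 * b - q2 * a) * (u / r) + (p1 * b - q1 * a) * (u1 / r))
              - (p2 * q + p1 * q1 - (q2 * p + q1 * p1)) * c) * ((1 - u1 / r) * (p1 * b - q1 * a))
     - (q * a - p * b + (p1 * b - q1 * a) * (u / r) - (p1 * q - q1 * p) * c)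
       * ((- (u2 / r)) * (p1 * b - q1 * a) + (1 - u1 / r) * (p2 * b - q2 * a))
   = - ((1 - u1 / r)*(1 - u1 / r)*(p1 * b - q1 * a)*(p1 * b - q1 * a))
     - r * (1 - u1 / r) * (b * p - a * q) * (q * a - p * b + (p1 * b - q1 * a) * (u / r) - (p1 * q - q1 * p) * c) / s
     + (q * a - p * b + (p1 * b - q1 * a) * (u / r) - (p1 * q - q1 * p) * c) * u2 * (p1 * b - q1 * a) / r"
proof -
  have P2: "p2 = (r * p - u * p1) / s" using p2 s by (simp add: field_simps)
  have Q2: "q2 = (r * q - u * q1) / s" using q2 s by (simp add: field_simps)
  show ?thesis unfolding P2 Q2
    using s r by (simp add: field_simps power2_eq_square)
qed

lemma deriv_pos_inc:
  fixes f fp fpp s mu :: "real \<Rightarrow> real" and r :: real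
  assumes mono: "\<And>x y. 0 < x \<Longrightarrow> x \<le> y \<Longrightarrow> f x \<le> f y"
    and d1: "\<And>x. x > 0 \<Longrightarrow> (f has_real_derivative fp x) (at x)"
    and d2: "\<And>x. x > 0 \<Longrightarrow> (fp has_real_derivative fpp x) (at x)"
    and ode: "\<And>x. x > 0 \<Longrightarrow> s x * fpp x = r * f x - mu x * fp x"
    and spos: "\<And>x. x > 0 \<Longrightarrow> s x > 0"
    and fpos: "\<And>x. x > 0 \<Longrightarrow> f x > 0"
    and r: "r > 0"
    and x: "x > 0"
  shows "fp x > 0"
proof -
  have nn: "fp z \<ge> 0" if z: "z > 0" for z
  proof (rule ccontr)
    assume "\<not> fp z \<ge> 0"
    then have "fp z < 0" by simp
    from DERIV_neg_dec_right[OF d1[OF z] this] obtain d where d: "d > 0"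
      and hd: "\<forall>h>0. h < d \<longrightarrow> f z > f (z + h)" by blast
    have "f z > f (z + d/2)" using hd d by simp
    moreover have "f z \<le> f (z + d/2)" using mono[OF z] d by simp
    ultimately show False by simp
  qed
  show ?thesis
  proof (rule ccontr)
    assume "\<not> fp x > 0"
    then have f10: "fp x = 0" using nn[OF x] by simp
    have "s x * fpp x = r * f x" using ode[OF x] f10 by simp
    moreover have "r * f x > 0" using r fpos[OF x] by simp
    ultimately have "fpp x > 0" using spos[OF x] by (metis zero_less_mult_pos)
    from DERIV_pos_inc_left[OF d2[OF x] this] obtain d where d: "d > 0"
      and hd: "\<forall>h>0. h < d \<longrightarrow> fp (x - h) < fp x" by blast
    define h where "h = min (d/2) (x/2)"
    have "h > 0" "h < d" "x - h > 0" using d x by (auto simp: h_def)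
    then have "fp (x - h) < 0" using hd f10 by auto
    moreover have "fp (x - h) \<ge> 0" using nn \<open>x - h > 0\<close> by simp
    ultimately show False by simp
  qed
qed

lemma deriv_neg_dec:
  fixes f fp fpp s mu :: "real \<Rightarrow> real" and r :: real
  assumes mono: "\<And>x y. 0 < x \<Longrightarrow> x \<le> y \<Longrightarrow> f y \<le> f x"
    and d1: "\<And>x. x > 0 \<Longrightarrow> (f has_real_derivative fp x) (at x)"
    and d2: "\<And>x. x > 0 \<Longrightarrow> (fp has_real_derivative fpp x) (at x)"
    and ode: "\<And>x. x > 0 \<Longrightarrow> s x * fpp x = r * f x - mu x * fp x"
    and spos: "\<And>x. x > 0 \<Longrightarrow> s x > 0"
    and fpos: "\<And>x. x > 0 \<Longrightarrow> f x > 0"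
    and r: "r > 0"
    and x: "x > 0"
  shows "fp x < 0"
proof -
  have nn: "fp z \<le> 0" if z: "z > 0" for z
  proof (rule ccontr)
    assume "\<not> fp z \<le> 0"
    then have "fp z > 0" by simp
    from DERIV_pos_inc_right[OF d1[OF z] this] obtain d where d: "d > 0"
      and hd: "\<forall>h>0. h < d \<longrightarrow> f z < f (z + h)" by blast
    have "f z < f (z + d/2)" using hd d by simp
    moreover have "f (z + d/2) \<le> f z" using mono[OF z] d by simp
    ultimately show False by simp
  qed
  show ?thesis
  proof (rule ccontr)
    assume "\<not> fp x < 0"
    then have f10: "fp x = 0" using nn[OF x] by simp
    have "s x * fpp x = r * f x" using ode[OF x] f10 by simp
    moreover have "r * f x > 0" using r fpos[OF x] by simp
    ultimately have "fpp x > 0" using spos[OF x] by (metis zero_less_mult_pos)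
    from DERIV_pos_inc_right[OF d2[OF x] this] obtain d where d: "d > 0"
      and hd: "\<forall>h>0. h < d \<longrightarrow> fp x < fp (x + h)" by blast
    have "fp (x + d/2) > 0" using hd f10 d by auto
    moreover have "fp (x + d/2) \<le> 0" using nn x d by simp
    ultimately show False by simp
  qed
qed

theorem lemma4:
  fixes \<alpha> :: ereal and \<mu> \<sigma> U U1 U2 \<psi> \<phi> \<eta> :: "real \<Rightarrow> real"
    and r ustar xbar :: real
  assumes alpha: "\<alpha> < 0"
    and mu_lip: "\<exists>L. L-lipschitz_on (state_space \<alpha>) \<mu>"
    and sigma_lip: "\<exists>L. L-lipschitz_on (state_space \<alpha>) \<sigma>"
    and sigma_pos: "\<forall>x\<in>state_space \<alpha>. \<sigma> x > 0"
    and nat_l: "natural_left \<alpha> \<mu> \<sigma>"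
    and nat_r: "natural_right \<mu> \<sigma>"
    and r_pos: "r > 0"
    and U_nonneg: "\<forall>x\<ge>0. U x \<ge> 0"
    \<comment> \<open>Assumption (a)\<close>
    and mu_diff: "\<forall>x\<in>state_space \<alpha>. \<mu> differentiable (at x)"
    and sigma_diff: "\<forall>x\<in>state_space \<alpha>. \<sigma> differentiable (at x)"
    and dmu_lip: "\<exists>C. C-lipschitz_on (state_space \<alpha>) (deriv \<mu>)"
    and dsigma_lip: "\<exists>C. C-lipschitz_on (state_space \<alpha>) (deriv \<sigma>)"
    and mu0: "\<mu> 0 > r * U 0"
    and dmu_sup: "\<exists>c<r. \<forall>x\<ge>0. deriv \<mu> x \<le> c"
    \<comment> \<open>Assumption (b)\<close>
    and U_mono: "mono_on {0..} U"
    and U_concave: "concave_on {0..} U"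
    and U_d1: "\<forall>x\<ge>0. (U has_real_derivative U1 x) (at x within {0..})"
    and U_d2: "\<forall>x\<ge>0. (U1 has_real_derivative U2 x) (at x within {0..})"
    and U2_cont: "continuous_on {0..} U2"
    and ustar: "ustar \<ge> 0"
    and U1_ge: "\<forall>x\<in>{0..ustar}. U1 x \<ge> 1"
    and U1_eq: "\<forall>x\<ge>ustar. U1 x = 1"
    and U_gen: "\<forall>x\<in>{0..<ustar}. \<mu> x * U1 x + (\<sigma> x)\<^sup>2 * U2 x / 2 - r * U x > 0"
    \<comment> \<open>Assumption (c)\<close>
    and mu_d2: "\<forall>x\<ge>0. deriv \<mu> differentiable (at x)"
    and mu_concave: "\<forall>x\<ge>0. deriv (deriv \<mu>) x \<le> 0"
    \<comment> \<open>the point xbar\<close>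
    and xbar_pos: "xbar > 0"
    and xbar_l: "\<forall>x\<in>{0..<xbar}. \<mu> x - r * U x > 0"
    and xbar_r: "\<forall>x>xbar. \<mu> x - r * U x < 0"
    \<comment> \<open>the fundamental solutions psi (increasing) and phi (decreasing)\<close>
    and psi_pos: "\<forall>x\<in>state_space \<alpha>. \<psi> x > 0"
    and psi_mono: "mono_on (state_space \<alpha>) \<psi>"
    and psi_ode: "\<forall>x\<in>state_space \<alpha>. \<psi> differentiable (at x) \<and> deriv \<psi> differentiable (at x)
        \<and> (\<sigma> x)\<^sup>2 * deriv (deriv \<psi>) x / 2 + \<mu> x * deriv \<psi> x - r * \<psi> x = 0"
    and phi_pos: "\<forall>x\<in>state_space \<alpha>. \<phi> x > 0"
    and phi_mono: "antimono_on (state_space \<alpha>) \<phi>"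
    and phi_ode: "\<forall>x\<in>state_space \<alpha>. \<phi> differentiable (at x) \<and> deriv \<phi> differentiable (at x)
        \<and> (\<sigma> x)\<^sup>2 * deriv (deriv \<phi>) x / 2 + \<mu> x * deriv \<phi> x - r * \<phi> x = 0"
    \<comment> \<open>the known properties of eta\<close>
    and eta: "\<forall>m\<in>{0..xbar}. m \<le> \<eta> m \<and> Nfun \<psi> \<phi> \<mu> r U (\<eta> m) m = 0
        \<and> (\<forall>x. 0 \<le> x \<and> x < \<eta> m \<longrightarrow> Nfun \<psi> \<phi> \<mu> r U x m > 0)
        \<and> (\<forall>x. \<eta> m < x \<longrightarrow> Nfun \<psi> \<phi> \<mu> r U x m < 0)"
  shows "(\<forall>a b. 0 < a \<and> a < b \<and> b \<le> xbar \<longrightarrow>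
            Nfun \<psi> \<phi> \<mu> r U b b / (Gfun \<mu> r b * Dfun \<psi> \<phi> b b)
          < Nfun \<psi> \<phi> \<mu> r U a a / (Gfun \<mu> r a * Dfun \<psi> \<phi> a a))
       \<and> (\<forall>m. 0 < m \<and> m \<le> xbar \<longrightarrow>
           (\<forall>x y. m \<le> x \<and> x < y \<and> y \<le> \<eta> m \<longrightarrow>
              Nfun \<psi> \<phi> \<mu> r U y m / (Gfun \<mu> r y * Dfun \<psi> \<phi> y m)
            < Nfun \<psi> \<phi> \<mu> r U x m / (Gfun \<mu> r x * Dfun \<psi> \<phi> x m)))"
proof -
  have S: "x \<in> state_space \<alpha>" if "x \<ge> 0" for x
  proof -
    have "ereal 0 \<le> ereal x" using that by simp
    then show ?thesis using alpha unfolding state_space_def zero_ereal_def by (simp add: less_le_trans)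
  qed
  define s where "s x = (\<sigma> x)\<^sup>2 / 2" for x
  have spos: "s x > 0" if "x > 0" for x
  proof -
    have "\<sigma> x > 0" using sigma_pos S[of x] that by simp
    then show ?thesis by (simp add: s_def)
  qed
  have dpsi: "(\<psi> has_real_derivative deriv \<psi> x) (at x)" if "x > 0" for x
    using psi_ode S[of x] that by (simp add: DERIV_deriv_iff_real_differentiable)
  have dpsi1: "(deriv \<psi> has_real_derivative deriv (deriv \<psi>) x) (at x)" if "x > 0" for x
    using psi_ode S[of x] that by (simp add: DERIV_deriv_iff_real_differentiable)
  have psiode: "s x * deriv (deriv \<psi>) x = r * \<psi> x - \<mu> x * deriv \<psi> x" if "x > 0" for x
    using psi_ode S[of x] that unfolding s_def by (auto simp: algebra_simps)
  have dphi: "(\<phi> has_real_derivative deriv \<phi> x) (at x)" if "x > 0" for x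
    using phi_ode S[of x] that by (simp add: DERIV_deriv_iff_real_differentiable)
  have dphi1: "(deriv \<phi> has_real_derivative deriv (deriv \<phi>) x) (at x)" if "x > 0" for x
    using phi_ode S[of x] that by (simp add: DERIV_deriv_iff_real_differentiable)
  have phiode: "s x * deriv (deriv \<phi>) x = r * \<phi> x - \<mu> x * deriv \<phi> x" if "x > 0" for x
    using phi_ode S[of x] that unfolding s_def by (auto simp: algebra_simps)
  have dmu: "(\<mu> has_real_derivative deriv \<mu> x) (at x)" if "x > 0" for x
    using mu_diff S[of x] that by (simp add: DERIV_deriv_iff_real_differentiable)
  have dmu1: "(deriv \<mu> has_real_derivative deriv (deriv \<mu>) x) (at x)" if "x > 0" for x
    using mu_d2 that by (simp add: DERIV_deriv_iff_real_differentiable)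
  have dU: "(U has_real_derivative U1 x) (at x)" if "x > 0" for x
  proof -
    have "(U has_real_derivative U1 x) (at x within {0..})" using U_d1 that by simp
    moreover have "at x within {0::real..} = at x"
      by (rule at_within_interior) (use that in simp)
    ultimately show ?thesis by metis
  qed
  have U1ge: "U1 x \<ge> 1" if "x \<ge> 0" for x
    using U1_ge U1_eq that by (cases "x \<le> ustar") auto
  obtain cm where cm: "cm < r" "\<forall>x\<ge>0. deriv \<mu> x \<le> cm" using dmu_sup by blast
  have Gp: "r - deriv \<mu> x > 0" if "x \<ge> 0" for x using cm that by force
  have Gp2: "1 - deriv \<mu> x / r > 0" if "x \<ge> 0" for x
    using Gp[OF that] r_pos by (simp add: field_simps)
  have psi1: "deriv \<psi> x > 0" if "x > 0" for x
  proof (rule deriv_pos_inc[where f=\<psi> and fp="deriv \<psi>" and fpp="deriv (deriv \<psi>)" and s=s and mu=\<mu> and r=r])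
    show "\<psi> a \<le> \<psi> b" if "0 < a" "a \<le> b" for a b
      using psi_mono S[of a] S[of b] that unfolding mono_on_def by auto
  next
    show "(\<psi> has_real_derivative deriv \<psi> z) (at z)" if "z > 0" for z by (rule dpsi[OF that])
  next
    show "(deriv \<psi> has_real_derivative deriv (deriv \<psi>) z) (at z)" if "z > 0" for z by (rule dpsi1[OF that])
  next
    show "s z * deriv (deriv \<psi>) z = r * \<psi> z - \<mu> z * deriv \<psi> z" if "z > 0" for z by (rule psiode[OF that])
  next
    show "s z > 0" if "z > 0" for z by (rule spos[OF that])
  next
    show "\<psi> z > 0" if "z > 0" for z using psi_pos S[of z] that by simp
  qed (use r_pos that in simp_all)
  have phi1: "deriv \<phi> x < 0" if "x > 0" for x
  proof (rule deriv_neg_dec[where f=\<phi> and fp="deriv \<phi>" and fpp="deriv (deriv \<phi>)" and s=s and mu=\<mu> and r=r])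
    show "\<phi> b \<le> \<phi> a" if "0 < a" "a \<le> b" for a b
      using phi_mono S[of a] S[of b] that unfolding monotone_on_def by auto
  next
    show "(\<phi> has_real_derivative deriv \<phi> z) (at z)" if "z > 0" for z by (rule dphi[OF that])
  next
    show "(deriv \<phi> has_real_derivative deriv (deriv \<phi>) z) (at z)" if "z > 0" for z by (rule dphi1[OF that])
  next
    show "s z * deriv (deriv \<phi>) z = r * \<phi> z - \<mu> z * deriv \<phi> z" if "z > 0" for z by (rule phiode[OF that])
  next
    show "s z > 0" if "z > 0" for z by (rule spos[OF that])
  next
    show "\<phi> z > 0" if "z > 0" for z using phi_pos S[of z] that by simp
  qed (use r_pos that in simp_all)
  have Dpos: "Dfun \<psi> \<phi> x m > 0" if "x > 0" "m > 0" for x m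
  proof -
    have "deriv \<psi> x * \<phi> m > 0" using psi1[OF that(1)] phi_pos S[of m] that by simp
    moreover have "deriv \<phi> x * \<psi> m < 0" using phi1[OF that(1)] psi_pos S[of m] that
      by (simp add: mult_neg_pos)
    ultimately show ?thesis unfolding Dfun_def by simp
  qed
  have partI: "\<forall>a b. 0 < a \<and> a < b \<and> b \<le> xbar \<longrightarrow>
            Nfun \<psi> \<phi> \<mu> r U b b / (Gfun \<mu> r b * Dfun \<psi> \<phi> b b)
          < Nfun \<psi> \<phi> \<mu> r U a a / (Gfun \<mu> r a * Dfun \<psi> \<phi> a a)"
  proof (intro allI impI)
    fix a b assume ab: "0 < a \<and> a < b \<and> b \<le> xbar"
    define g where "g = (\<lambda>x. (\<mu> x - r * U x) / (r - deriv \<mu> x))"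
    have eq: "Nfun \<psi> \<phi> \<mu> r U x x / (Gfun \<mu> r x * Dfun \<psi> \<phi> x x) = g x" if "x > 0" for x
    proof -
      have W: "Dfun \<psi> \<phi> x x > 0" using Dpos that by simp
      have NE: "Nfun \<psi> \<phi> \<mu> r U x x = Dfun \<psi> \<phi> x x * (\<mu> x / r - U x)"
        unfolding Nfun_def by (simp add: algebra_simps)
      have gp: "r - deriv \<mu> x > 0" using Gp[of x] that by simp
      show ?thesis unfolding g_def Gfun_def NE using W r_pos gp by (simp add: field_simps)
    qed
    have dg: "(g has_real_derivative ((deriv \<mu> x - r * U1 x) * (r - deriv \<mu> x)
        - (\<mu> x - r * U x) * (0 - deriv (deriv \<mu>) x)) / ((r - deriv \<mu> x) * (r - deriv \<mu> x))) (at x)"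
      if "x > 0" for x
    proof -
      have 1: "((\<lambda>x. \<mu> x - r * U x) has_real_derivative deriv \<mu> x - r * U1 x) (at x)"
        by (intro DERIV_diff DERIV_cmult dmu[OF that] dU[OF that])
      have 2: "((\<lambda>x. r - deriv \<mu> x) has_real_derivative 0 - deriv (deriv \<mu>) x) (at x)"
        by (intro DERIV_diff DERIV_const dmu1[OF that])
      have "r - deriv \<mu> x \<noteq> 0" using Gp[of x] that by simp
      from DERIV_divide[OF 1 2 this] show ?thesis unfolding g_def by simp
    qed
    have "g b < g a"
    proof (rule DERIV_neg_imp_decreasing_open[where f=g and a=a and b=b])
      show "a < b" using ab by simp
    next
      fix x assume x: "a < x" "x < b"
      then have x0: "x > 0" "x < xbar" using ab by auto
      have gp: "r - deriv \<mu> x > 0" using Gp[of x] x0 by simp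
      have "r * U1 x \<ge> r" using U1ge[of x] x0 r_pos by simp
      then have "deriv \<mu> x - r * U1 x < 0" using gp by simp
      then have 1: "(deriv \<mu> x - r * U1 x) * (r - deriv \<mu> x) < 0"
        using gp by (simp add: mult_neg_pos)
      have "\<mu> x - r * U x > 0" using xbar_l x0 by simp
      moreover have "0 - deriv (deriv \<mu>) x \<ge> 0" using mu_concave x0 by simp
      ultimately have 2: "(\<mu> x - r * U x) * (0 - deriv (deriv \<mu>) x) \<ge> 0" by (intro mult_nonneg_nonneg) auto
      have 3: "(r - deriv \<mu> x) * (r - deriv \<mu> x) > 0" using gp by simp
      have "((deriv \<mu> x - r * U1 x) * (r - deriv \<mu> x)
        - (\<mu> x - r * U x) * (0 - deriv (deriv \<mu>) x)) / ((r - deriv \<mu> x) * (r - deriv \<mu> x)) < 0"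
        using 1 2 3 by (intro divide_neg_pos) auto
      then show "\<exists>y. DERIV g x :> y \<and> y < 0" using dg[OF x0(1)] by blast
    next
      show "continuous_on {a..b} g"
      proof (rule continuous_at_imp_continuous_on, intro ballI)
        fix x assume "x \<in> {a..b}"
        then have "x > 0" using ab by simp
        from DERIV_isCont[OF dg[OF this]] show "isCont g x" .
      qed
    qed
    then show "Nfun \<psi> \<phi> \<mu> r U b b / (Gfun \<mu> r b * Dfun \<psi> \<phi> b b)
          < Nfun \<psi> \<phi> \<mu> r U a a / (Gfun \<mu> r a * Dfun \<psi> \<phi> a a)"
      using eq[of a] eq[of b] ab by simp
  qed
  have partII: "\<forall>m. 0 < m \<and> m \<le> xbar \<longrightarrow>
           (\<forall>x y. m \<le> x \<and> x < y \<and> y \<le> \<eta> m \<longrightarrow>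
              Nfun \<psi> \<phi> \<mu> r U y m / (Gfun \<mu> r y * Dfun \<psi> \<phi> y m)
            < Nfun \<psi> \<phi> \<mu> r U x m / (Gfun \<mu> r x * Dfun \<psi> \<phi> x m))"
  proof (intro allI impI)
    fix m x y assume m: "0 < m \<and> m \<le> xbar" and xy: "m \<le> x \<and> x < y \<and> y \<le> \<eta> m"
    define a where "a = \<psi> m"
    define b where "b = \<phi> m"
    define c where "c = U m"
    define NN where "NN = (\<lambda>t. \<phi> t * a - \<psi> t * b + (deriv \<psi> t * b - deriv \<phi> t * a) * (\<mu> t / r)
                         - (deriv \<psi> t * \<phi> t - deriv \<phi> t * \<psi> t) * c)"
    define DD where "DD = (\<lambda>t. (1 - deriv \<mu> t / r) * (deriv \<psi> t * b - deriv \<phi> t * a))"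
    define R where "R = (\<lambda>t. NN t / DD t)"
    have Req: "Nfun \<psi> \<phi> \<mu> r U t m / (Gfun \<mu> r t * Dfun \<psi> \<phi> t m) = R t" for t
      unfolding R_def NN_def DD_def Nfun_def Gfun_def Dfun_def a_def b_def c_def by simp
    have NNeq: "NN t = Nfun \<psi> \<phi> \<mu> r U t m" for t
      unfolding NN_def Nfun_def Dfun_def a_def b_def c_def by simp
    have DDpos: "DD t > 0" if "t > 0" for t
    proof -
      have "Dfun \<psi> \<phi> t m > 0" using Dpos that m by simp
      then have "deriv \<psi> t * b - deriv \<phi> t * a > 0" unfolding Dfun_def a_def b_def by simp
      then show ?thesis unfolding DD_def using Gp2[of t] that by simp
    qed
    have dR: "(R has_real_derivative ((deriv \<phi> t * a - deriv \<psi> t * b + ((deriv (deriv \<psi>) t * b - deriv (deriv \<phi>) t * a) * (\<mu> t / r) + (deriv \<psi> t * b - deriv \<phi> t * a) * (deriv \<mu> t / r)) - (deriv (deriv \<psi>) t * \<phi> t + deriv \<psi> t * deriv \<phi> t - (deriv (deriv \<phi>) t * \<psi> t + deriv \<phi> t * deriv \<psi> t)) * c) * DD t - NN t * ((- (deriv (deriv \<mu>) t / r)) * (deriv \<psi> t * b - deriv \<phi> t * a) + (1 - deriv \<mu> t / r) * (deriv (deriv \<psi>) t * b - deriv (deriv \<phi>) t * a))) / (DD t * DD t)) (at t)"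
      if "t > 0" for t
    proof -
      have dN: "(NN has_real_derivative (deriv \<phi> t * a - deriv \<psi> t * b + ((deriv (deriv \<psi>) t * b - deriv (deriv \<phi>) t * a) * (\<mu> t / r) + (deriv \<psi> t * b - deriv \<phi> t * a) * (deriv \<mu> t / r)) - (deriv (deriv \<psi>) t * \<phi> t + deriv \<psi> t * deriv \<phi> t - (deriv (deriv \<phi>) t * \<psi> t + deriv \<phi> t * deriv \<psi> t)) * c)) (at t)"
        unfolding NN_def using r_pos
        by (auto intro!: derivative_eq_intros dpsi[OF that] dpsi1[OF that] dphi[OF that]
             dphi1[OF that] dmu[OF that] simp: field_simps)
      have dD: "(DD has_real_derivative ((- (deriv (deriv \<mu>) t / r)) * (deriv \<psi> t * b - deriv \<phi> t * a) + (1 - deriv \<mu> t / r) * (deriv (deriv \<psi>) t * b - deriv (deriv \<phi>) t * a))) (at t)"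
        unfolding DD_def
        apply (auto intro!: derivative_eq_intros dpsi[OF that] dpsi1[OF that] dphi[OF that]
             dphi1[OF that] dmu[OF that] dmu1[OF that])
        using r_pos by (simp add: field_simps)
      have "DD t \<noteq> 0" using DDpos[OF that] by simp
      from DERIV_divide[OF dN dD this] show ?thesis unfolding R_def .
    qed
    have Eq: "(deriv \<phi> t * a - deriv \<psi> t * b + ((deriv (deriv \<psi>) t * b - deriv (deriv \<phi>) t * a) * (\<mu> t / r) + (deriv \<psi> t * b - deriv \<phi> t * a) * (deriv \<mu> t / r)) - (deriv (deriv \<psi>) t * \<phi> t + deriv \<psi> t * deriv \<phi> t - (deriv (deriv \<phi>) t * \<psi> t + deriv \<phi> t * deriv \<psi> t)) * c) * DD t - NN t * ((- (deriv (deriv \<mu>) t / r)) * (deriv \<psi> t * b - deriv \<phi> t * a) + (1 - deriv \<mu> t / r) * (deriv (deriv \<psi>) t * b - deriv (deriv \<phi>) t * a)) = - ((1 - deriv \<mu> t / r)*(1 - deriv \<mu> t / r)*(deriv \<psi> t * b - deriv \<phi> t * a)*(deriv \<psi> t * b - deriv \<phi> t * a)) - r * (1 - deriv \<mu> t / r) * (b * \<psi> t - a * \<phi> t) * NN t / s t + NN t * deriv (deriv \<mu>) t * (deriv \<psi> t * b - deriv \<phi> t * a) / r" if "t > 0" for t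
      unfolding NN_def DD_def by (rule alg2[OF spos[OF that] r_pos psiode[OF that] phiode[OF that]])
    have neg: "((deriv \<phi> t * a - deriv \<psi> t * b + ((deriv (deriv \<psi>) t * b - deriv (deriv \<phi>) t * a) * (\<mu> t / r) + (deriv \<psi> t * b - deriv \<phi> t * a) * (deriv \<mu> t / r)) - (deriv (deriv \<psi>) t * \<phi> t + deriv \<psi> t * deriv \<phi> t - (deriv (deriv \<phi>) t * \<psi> t + deriv \<phi> t * deriv \<psi> t)) * c) * DD t - NN t * ((- (deriv (deriv \<mu>) t / r)) * (deriv \<psi> t * b - deriv \<phi> t * a) + (1 - deriv \<mu> t / r) * (deriv (deriv \<psi>) t * b - deriv (deriv \<phi>) t * a))) / (DD t * DD t) < 0" if t: "x < t" "t < y" for t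
    proof -
      have t0: "t > 0" "t \<ge> m" using t xy m by auto
      have Gt: "(1 - deriv \<mu> t / r) > 0" using Gp2[of t] t0 by simp
      have H1t: "(deriv \<psi> t * b - deriv \<phi> t * a) > 0" using Dpos[of t m] t0 m unfolding Dfun_def a_def b_def by simp
      have "\<psi> m \<le> \<psi> t" using psi_mono S[of m] S[of t] t0 m unfolding mono_on_def by auto
      moreover have "\<phi> t \<le> \<phi> m" using phi_mono S[of m] S[of t] t0 m unfolding monotone_on_def by auto
      moreover have "\<psi> m > 0" "\<phi> m > 0" using psi_pos phi_pos S[of m] m by auto
      ultimately have "\<phi> m * \<psi> m \<le> \<phi> m * \<psi> t" "\<psi> m * \<phi> t \<le> \<psi> m * \<phi> m" by auto
      then have Ht: "(b * \<psi> t - a * \<phi> t) \<ge> 0" unfolding a_def b_def by (simp add: algebra_simps)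
      have Nt: "NN t > 0" unfolding NNeq using eta m t xy t0 by auto
      have u2: "deriv (deriv \<mu>) t \<le> 0" using mu_concave t0 by simp
      have st: "s t > 0" using spos t0 by simp
      have 1: "(1 - deriv \<mu> t / r)*(1 - deriv \<mu> t / r)*(deriv \<psi> t * b - deriv \<phi> t * a)*(deriv \<psi> t * b - deriv \<phi> t * a) > 0" using Gt H1t by simp
      have 2: "r * (1 - deriv \<mu> t / r) * (b * \<psi> t - a * \<phi> t) * NN t / s t \<ge> 0" using Gt Ht Nt st r_pos by simp
      have "NN t * deriv (deriv \<mu>) t * (deriv \<psi> t * b - deriv \<phi> t * a) \<le> 0" using Nt u2 H1t
        by (simp add: mult_nonneg_nonpos mult_nonpos_nonneg)
      then have 3: "NN t * deriv (deriv \<mu>) t * (deriv \<psi> t * b - deriv \<phi> t * a) / r \<le> 0" using r_pos by (simp add: divide_nonpos_pos)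
      have "- ((1 - deriv \<mu> t / r)*(1 - deriv \<mu> t / r)*(deriv \<psi> t * b - deriv \<phi> t * a)*(deriv \<psi> t * b - deriv \<phi> t * a)) - r * (1 - deriv \<mu> t / r) * (b * \<psi> t - a * \<phi> t) * NN t / s t + NN t * deriv (deriv \<mu>) t * (deriv \<psi> t * b - deriv \<phi> t * a) / r < 0" using 1 2 3 by linarith
      moreover have "DD t * DD t > 0" using DDpos[OF t0(1)] by simp
      ultimately show ?thesis unfolding Eq[OF t0(1)] by (simp add: divide_neg_pos)
    qed
    have "R y < R x"
    proof (rule DERIV_neg_imp_decreasing_open[where f=R and a=x and b=y])
      show "x < y" using xy by simp
    next
      fix t assume t: "x < t" "t < y"
      then have "t > 0" using xy m by auto
      then show "\<exists>z. DERIV R t :> z \<and> z < 0" using dR neg[OF t] by blast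
    next
      show "continuous_on {x..y} R"
      proof (rule continuous_at_imp_continuous_on, intro ballI)
        fix t assume "t \<in> {x..y}"
        then have "t > 0" using xy m by simp
        from DERIV_isCont[OF dR[OF this]] show "isCont R t" .
      qed
    qed
    then show "Nfun \<psi> \<phi> \<mu> r U y m / (Gfun \<mu> r y * Dfun \<psi> \<phi> y m)
            < Nfun \<psi> \<phi> \<mu> r U x m / (Gfun \<mu> r x * Dfun \<psi> \<phi> x m)"
      unfolding Req .
  qed
  show ?thesis using partI partII by blast
qed

end
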